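(* Fix $a, b > 0$, $\delta_1, \delta_2 > 0$, $0 < x < 1$, and $\varepsilon_{1,1}, \varepsilon_{1,2} > 0$. Let $j_1$ be a positive integer such that $$1 - e^{-\delta_1}\sum_{j=0}^{j_1-1}\frac{\delta_1^j}{j!} < \varepsilon_{1,2}.$$ For each $j = 0, 1, \dots, j_1-1$, let $n_j$ be a nonnegative integer such that $$e^{-\delta_1}\frac{\delta_1^j}{j!}\Big(1 - e^{-\delta_2}\sum_{l=0}^{n_j-1}\frac{\delta_2^l}{l!}\Big) < \varepsilon_{1,1}.$$ Define the truncated sum $\hat B = \sum_{j=0}^{j_1-1}\sum_{l=0}^{n_j-1} L_{j,l}$. Define $$U1_{a,b}^{\delta_1,\delta_2}(x) = 1 - e^{-(\delta_1+\delta_2)}\sum_{j=0}^{j_1-1}\frac{\delta_1^j}{j!}\sum_{l=0}^{n_j-1}\frac{\delta_2^l}{l!}.$$ Then $$B_{a,b}^{\delta_1,\delta_2}(x) - \hat B < U1_{a,b}^{\delta_1,\delta_2}(x) < j_1\varepsilon_{1,1} + \varepsilon_{1,2}.$$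
   Context: For $p, q > 0$, $I_x(p,q) = \frac{\int_0^x t^{p-1}(1-t)^{q-1}\,dt}{B(p,q)}$ is the regularized incomplete beta function, where $B(p,q) = \Gamma(p)\Gamma(q)/\Gamma(p+q)$. The CDF of the doubly non-central beta distribution with parameters $a, b$ and $\delta_1, \delta_2$ is $$B_{a,b}^{\delta_1,\delta_2}(x) = \sum_{j=0}^\infty\sum_{l=0}^\infty L_{j,l}, \qquad L_{j,l} = e^{-(\delta_1+\delta_2)}\frac{\delta_1^j\delta_2^l}{j!\,l!}\,I_x(j+a, l+b).$$ Empty sums are zero. *)

theory Defs
  imports "HOL-Analysis.Analysis"
begin

definition inc_beta_reg :: "real \<Rightarrow> real \<Rightarrow> real \<Rightarrow> real" where
  "inc_beta_reg x p q =
     integral {0..x} (\<lambda>t. t powr (p - 1) * (1 - t) powr (q - 1)) / Beta p q"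

definition L_term :: "real \<Rightarrow> real \<Rightarrow> real \<Rightarrow> real \<Rightarrow> real \<Rightarrow> nat \<Rightarrow> nat \<Rightarrow> real" where
  "L_term a b d1 d2 x j l =
     exp (-(d1 + d2)) * (d1 ^ j * d2 ^ l / (fact j * fact l)) * inc_beta_reg x (real j + a) (real l + b)"

definition dncbeta_cdf :: "real \<Rightarrow> real \<Rightarrow> real \<Rightarrow> real \<Rightarrow> real \<Rightarrow> real" where
  "dncbeta_cdf a b d1 d2 x = (\<Sum>\<^sub>\<infinity>(j, l) \<in> UNIV. L_term a b d1 d2 x j l)"

end

theory Submission
  imports Defs
begin

lemma inc_beta_bounds:
  fixes p q x :: real
  assumes p: "p > 0" and q: "q > 0" and x0: "0 < x" and x1: "x < 1"
  shows "0 \<le> inc_beta_reg x p q \<and> inc_beta_reg x p q < 1"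
proof -
  define f where "f = (\<lambda>t::real. t powr (p - 1) * (1 - t) powr (q - 1))"
  define c where "c = (1 + x) / 2"
  have c: "x < c" "c < 1" using x1 by (auto simp: c_def)
  have hB: "(f has_integral Beta p q) {0..1}"
    unfolding f_def using has_integral_Beta_real[OF p q] .
  have fnn: "\<And>t. f t \<ge> 0" unfolding f_def by simp
  have int01: "f integrable_on {0..1}" using hB by blast
  have intx: "f integrable_on {0..x}"
    by (rule integrable_subinterval_real[OF int01]) (use x1 in auto)
  have intx1: "f integrable_on {x..1}"
    by (rule integrable_subinterval_real[OF int01]) (use x0 in auto)
  have intxc: "f integrable_on {x..c}"
    by (rule integrable_subinterval_real[OF int01]) (use x0 c in auto)
  have intc1: "f integrable_on {c..1}"
    by (rule integrable_subinterval_real[OF int01]) (use x0 c in auto)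
  have s1: "integral {0..x} f + integral {x..1} f = integral {0..1} f"
    using Henstock_Kurzweil_Integration.integral_combine[where a=0 and c=x and b=1 and f=f] x0 x1 int01 by auto
  have s2: "integral {x..c} f + integral {c..1} f = integral {x..1} f"
    using Henstock_Kurzweil_Integration.integral_combine[where a=x and c=c and b=1 and f=f] c intx1 by auto
  have B: "integral {0..1} f = Beta p q" using hB by blast
  have A0: "integral {0..x} f \<ge> 0" by (rule integral_nonneg[OF intx]) (simp add: fnn)
  have C0: "integral {c..1} f \<ge> 0" by (rule integral_nonneg[OF intc1]) (simp add: fnn)
  have cont: "continuous_on {x..c} f"
    unfolding f_def using x0 c
    by (intro continuous_intros) auto
  have "integral {x..c} (\<lambda>_. 0::real) < integral {x..c} f"
  proof (rule integral_less_real)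
    show "continuous_on {x..c} (\<lambda>_. 0::real)" by simp
    show "continuous_on {x..c} f" by (rule cont)
    show "{x<..<c} \<noteq> {}" using c by auto
    fix t assume "t \<in> {x<..<c}"
    then have "0 < t" "t < 1" using x0 c by auto
    then show "0 < f t" unfolding f_def by simp
  qed
  then have D: "integral {x..c} f > 0" by simp
  have Bpos: "Beta p q > 0" using s1 s2 B A0 C0 D by linarith
  have "integral {0..x} f < Beta p q" using s1 s2 B C0 D by linarith
  then show ?thesis using A0 Bpos
    unfolding inc_beta_reg_def f_def[symmetric] by simp
qed

lemma poisson_has_sum:
  fixes d :: real
  assumes "d \<ge> 0"
  shows "((\<lambda>l. exp (- d) * (d ^ l / fact l)) has_sum 1) UNIV"
proof -
  have "(\<lambda>l. d ^ l / fact l) sums exp d"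
    using exp_converges[of d] by (simp add: divide_inverse mult.commute scaleR_conv_of_real)
  then have "(\<lambda>l. exp (- d) * (d ^ l / fact l)) sums (exp (- d) * exp d)"
    by (rule sums_mult)
  then have "(\<lambda>l. exp (- d) * (d ^ l / fact l)) sums 1"
    by (simp add: exp_minus field_simps)
  then show ?thesis
    by (rule sums_nonneg_imp_has_sum) (simp add: exp_minus assms)
qed

theorem mainTheorem3:
  fixes a b d1 d2 x e11 e12 :: real and j1 :: nat and n :: "nat \<Rightarrow> nat"
  assumes "a > 0" "b > 0" "d1 > 0" "d2 > 0" "0 < x" "x < 1" "e11 > 0" "e12 > 0"
    and "j1 > 0"
    and "1 - exp (- d1) * (\<Sum>j<j1. d1 ^ j / fact j) < e12"
    and "\<And>j. j < j1 \<Longrightarrow>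
           exp (- d1) * (d1 ^ j / fact j) * (1 - exp (- d2) * (\<Sum>l<n j. d2 ^ l / fact l)) < e11"
  shows "dncbeta_cdf a b d1 d2 x - (\<Sum>j<j1. \<Sum>l<n j. L_term a b d1 d2 x j l)
           < 1 - exp (-(d1 + d2)) * (\<Sum>j<j1. d1 ^ j / fact j * (\<Sum>l<n j. d2 ^ l / fact l))
       \<and> 1 - exp (-(d1 + d2)) * (\<Sum>j<j1. d1 ^ j / fact j * (\<Sum>l<n j. d2 ^ l / fact l))
           < real j1 * e11 + e12"
proof -
  define p where "p = (\<lambda>j::nat. exp (- d1) * (d1 ^ j / fact j))"
  define q where "q = (\<lambda>l::nat. exp (- d2) * (d2 ^ l / fact l))"
  define w where "w = (\<lambda>(j::nat, l::nat). p j * q l)"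
  define I where "I = (\<lambda>(j::nat, l::nat). inc_beta_reg x (real j + a) (real l + b))"
  define F where "F = Sigma {..<j1} (\<lambda>j. {..<n j})"
  have finF: "finite F" unfolding F_def by auto
  have ppos: "\<And>j. p j > 0" unfolding p_def using assms(3) by simp
  have qpos: "\<And>l. q l > 0" unfolding q_def using assms(4) by simp
  have wpos: "\<And>z. w z > 0" unfolding w_def using ppos qpos by (auto intro: mult_pos_pos)
  have Ib: "\<And>z. 0 \<le> I z \<and> I z < 1" unfolding I_def
    using inc_beta_bounds assms(1,2,5,6) by (auto simp: add_pos_nonneg)
  have ee: "exp (- d1 - d2) = exp (- d1) * exp (- d2)" "exp (-(d1 + d2)) = exp (- d1) * exp (- d2)"
    by (simp_all add: exp_add[symmetric])
  have Lw: "\<And>j l. L_term a b d1 d2 x j l = w (j, l) * I (j, l)"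
    unfolding L_term_def w_def I_def p_def q_def using ee by (simp add: field_simps)
  have hp: "(p has_sum 1) UNIV" unfolding p_def by (rule poisson_has_sum) (use assms in simp)
  have hq: "(q has_sum 1) UNIV" unfolding q_def by (rule poisson_has_sum) (use assms in simp)
  have wsum: "w summable_on UNIV"
  proof (rule nonneg_bdd_above_summable_on)
    show "\<And>z. z \<in> UNIV \<Longrightarrow> 0 \<le> w z" using wpos less_imp_le by blast
    show "bdd_above (sum w ` {G. G \<subseteq> UNIV \<and> finite G})"
    proof (rule bdd_aboveI2)
      fix G :: "(nat \<times> nat) set" assume "G \<in> {G. G \<subseteq> UNIV \<and> finite G}"
      then have fG: "finite G" by auto
      obtain m where m: "G \<subseteq> {..<m} \<times> {..<m}"
      proof -
        have "finite (fst ` G \<union> snd ` G)" using fG by auto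
        then obtain m where "\<forall>k \<in> fst ` G \<union> snd ` G. k < m"
          by (meson finite_nat_bounded lessThan_iff subsetD)
        then have "G \<subseteq> {..<m} \<times> {..<m}" by force
        then show ?thesis using that by blast
      qed
      have "sum w G \<le> sum w ({..<m} \<times> {..<m})"
        using m wpos by (intro sum_mono2) (auto intro: less_imp_le)
      also have "\<dots> = (\<Sum>j<m. p j) * (\<Sum>l<m. q l)"
        unfolding w_def by (simp add: sum.cartesian_product[symmetric] sum_product)
      also have "\<dots> \<le> 1 * 1"
      proof (rule mult_mono)
        show "(\<Sum>j<m. p j) \<le> 1"
          using has_sum_mono_neutral[OF has_sum_finiteI[of "{..<m}" "sum p {..<m}" p] hp]
            ppos less_imp_le by auto
        show "(\<Sum>l<m. q l) \<le> 1"
          using has_sum_mono_neutral[OF has_sum_finiteI[of "{..<m}" "sum q {..<m}" q] hq]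
            qpos less_imp_le by auto
      qed (use ppos qpos in \<open>auto intro!: sum_nonneg simp: order_less_imp_le\<close>)
      finally show "sum w G \<le> 1" by simp
    qed
  qed
  have hw: "(w has_sum 1) UNIV"
  proof -
    have "(w has_sum 1) (Sigma UNIV (\<lambda>_. UNIV))"
    proof (rule has_sum_SigmaI)
      fix j :: nat assume "j \<in> UNIV"
      show "((\<lambda>l. w (j, l)) has_sum p j) UNIV"
        unfolding w_def using has_sum_cmult_right[OF hq, of "p j"] by simp
    next
      show "(p has_sum 1) UNIV" by (rule hp)
      show "w summable_on Sigma UNIV (\<lambda>_. UNIV)" using wsum by simp
    qed
    then show ?thesis by simp
  qed
  define L where "L = (\<lambda>z. w z * I z)"
  have Lsum: "L summable_on UNIV"
  proof (rule summable_on_comparison_test[OF wsum])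
    fix z show "L z \<le> w z" unfolding L_def using Ib[of z] wpos[of z]
      by (simp add: mult_left_le)
    show "0 \<le> L z" unfolding L_def using Ib[of z] wpos[of z] by simp
  qed
  have cdf: "dncbeta_cdf a b d1 d2 x = infsum L UNIV"
    unfolding dncbeta_cdf_def L_def by (simp add: Lw case_prod_unfold)
  have hL: "(L has_sum infsum L UNIV) UNIV" using Lsum by (rule has_sum_infsum)
  have Bhat: "(\<Sum>j<j1. \<Sum>l<n j. L_term a b d1 d2 x j l) = sum L F"
    unfolding F_def L_def by (simp add: sum.Sigma Lw)
  have wF: "exp (-(d1 + d2)) * (\<Sum>j<j1. d1 ^ j / fact j * (\<Sum>l<n j. d2 ^ l / fact l)) = sum w F"
    unfolding F_def w_def p_def q_def
    using ee by (simp add: sum.Sigma[symmetric] sum_distrib_left sum_distrib_right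
        field_simps)
  have d1: "(L has_sum (infsum L UNIV - sum L F)) (UNIV - F)"
    by (rule has_sum_Diff[OF hL has_sum_finiteI[OF finF refl]]) simp
  have d2: "(w has_sum (1 - sum w F)) (UNIV - F)"
    by (rule has_sum_Diff[OF hw has_sum_finiteI[OF finF refl]]) simp
  have notF: "(j1, 0) \<in> UNIV - F" unfolding F_def by auto
  have part1: "infsum L UNIV - sum L F < 1 - sum w F"
  proof (rule has_sum_strict_mono[OF d1 d2 _ notF])
    fix z show "L z \<le> w z" unfolding L_def using Ib[of z] wpos[of z]
      by (simp add: mult_left_le)
    show "L (j1, 0) < w (j1, 0)" unfolding L_def using Ib[of "(j1,0)"] wpos[of "(j1,0)"]
      by simp
  qed
  define S where "S = (\<lambda>j. (\<Sum>l<n j. d2 ^ l / fact l))"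
  have eq2: "1 - exp (-(d1 + d2)) * (\<Sum>j<j1. d1 ^ j / fact j * S j)
     = (1 - exp (- d1) * (\<Sum>j<j1. d1 ^ j / fact j))
       + (\<Sum>j<j1. exp (- d1) * (d1 ^ j / fact j) * (1 - exp (- d2) * S j))"
  proof -
    have e1: "exp (-(d1 + d2)) * (\<Sum>j<j1. d1 ^ j / fact j * S j)
       = (\<Sum>j<j1. exp (- d1) * (d1 ^ j / fact j) * (exp (- d2) * S j))"
      using ee by (simp add: sum_distrib_left mult_ac)
    have e2: "(\<Sum>j<j1. exp (- d1) * (d1 ^ j / fact j) * (1 - exp (- d2) * S j))
       = exp (- d1) * (\<Sum>j<j1. d1 ^ j / fact j)
         - (\<Sum>j<j1. exp (- d1) * (d1 ^ j / fact j) * (exp (- d2) * S j))"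
      by (simp add: right_diff_distrib sum_subtractf sum_distrib_left)
    show ?thesis using e1 e2 by simp
  qed
  have "(\<Sum>j<j1. exp (- d1) * (d1 ^ j / fact j) * (1 - exp (- d2) * S j)) < (\<Sum>j<j1. e11)"
    by (rule sum_strict_mono) (use assms(9,11) in \<open>auto simp: S_def\<close>)
  then have part2: "1 - exp (-(d1 + d2)) * (\<Sum>j<j1. d1 ^ j / fact j * S j) < real j1 * e11 + e12"
    using eq2 assms(10) by simp
  show ?thesis using part1 part2 cdf Bhat wF unfolding S_def by simp
qed

end
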